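(* Let $k\ge 0$ and let $P_{4k+3}$ be the path with vertices labeled $1,2,\dots,4k+3$ consecutively. Then $\tau(P_{4k+3})=k+2$, and for each vertex $v$, writing $v=4q+r$ with $0\le r<4$, $$TDV(v)=\begin{cases}0 & \text{if } v\equiv 0 \pmod 4,\\ q+1 & \text{if } v\equiv 1 \pmod 4,\\ k+2 & \text{if } v\equiv 2 \pmod 4,\\ k+1-q & \text{if } v\equiv 3 \pmod 4.\end{cases}$$
   Context: A set $D \subseteq V(G)$ is a total dominating set of a graph $G$ if every vertex of $G$ has a neighbor in $D$. $\gamma_t(G)$ is the minimum cardinality of a total dominating set; a minimum one is a $\gamma_t(G)$-set. $\tau(G)$ is the number of $\gamma_t(G)$-sets and $TDV(v)$ is the number of $\gamma_t(P_{4k+3})$-sets containing $v$. *)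

theory Defs
  imports Main
begin

text \<open>A finite simple graph given by a vertex set V and a symmetric irreflexive
adjacency relation E (only its restriction to V matters).\<close>

definition total_dominating_set :: "'a set \<Rightarrow> ('a \<Rightarrow> 'a \<Rightarrow> bool) \<Rightarrow> 'a set \<Rightarrow> bool" where
  "total_dominating_set V E D \<longleftrightarrow> D \<subseteq> V \<and> (\<forall>v\<in>V. \<exists>u\<in>D. E v u)"

definition gamma_t :: "'a set \<Rightarrow> ('a \<Rightarrow> 'a \<Rightarrow> bool) \<Rightarrow> nat" where
  "gamma_t V E = Min (card ` {D. total_dominating_set V E D})"

definition gamma_t_sets :: "'a set \<Rightarrow> ('a \<Rightarrow> 'a \<Rightarrow> bool) \<Rightarrow> 'a set set" where
  "gamma_t_sets V E = {D. total_dominating_set V E D \<and> card D = gamma_t V E}"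

definition tau :: "'a set \<Rightarrow> ('a \<Rightarrow> 'a \<Rightarrow> bool) \<Rightarrow> nat" where
  "tau V E = card (gamma_t_sets V E)"

definition TDV :: "'a set \<Rightarrow> ('a \<Rightarrow> 'a \<Rightarrow> bool) \<Rightarrow> 'a \<Rightarrow> nat" where
  "TDV V E v = card {D \<in> gamma_t_sets V E. v \<in> D}"

definition path_V :: "nat \<Rightarrow> nat set" where
  "path_V n = {1..n}"

definition path_E :: "nat \<Rightarrow> nat \<Rightarrow> bool" where
  "path_E u v \<longleftrightarrow> u = v + 1 \<or> v = u + 1"

end

theory Submission
  imports Defs
begin

definition Dj :: "nat \<Rightarrow> nat \<Rightarrow> nat set" where
 "Dj k j = {v \<in> {1..4*k+3}. v mod 4 = 2 \<or> (v mod 4 = 3 \<and> v div 4 < j) \<or> (v mod 4 = 1 \<and> j \<le> v div 4)}"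

lemma m4[simp]: "(4*q) mod 4 = (0::nat)" "(4*q+1) mod 4 = (1::nat)" "(4*q+2) mod 4 = (2::nat)" "(4*q+3) mod 4 = (3::nat)"
   "(4*q) div 4 = (q::nat)" "(4*q+1) div 4 = (q::nat)" "(4*q+2) div 4 = (q::nat)" "(4*q+3) div 4 = (q::nat)"
  by presburger+

lemma mod4_cases:
  fixes v :: nat
  assumes "\<And>q. v = 4*q \<Longrightarrow> P" "\<And>q. v = 4*q+1 \<Longrightarrow> P" "\<And>q. v = 4*q+2 \<Longrightarrow> P" "\<And>q. v = 4*q+3 \<Longrightarrow> P"
  shows P
proof -
  have "v = 4*(v div 4) + v mod 4" by simp
  moreover have "v mod 4 < 4" by simp
  ultimately show P using assms
    by (metis add.right_neutral less_Suc_eq numeral_3_eq_3 numeral_2_eq_2 One_nat_def numeral_eq_Suc pred_numeral_simps(2) semiring_norm(26) semiring_norm(27) less_Suc0 )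
qed

lemma dom:
  assumes "total_dominating_set {1..n} path_E D" "v \<in> {1..n}"
  shows "\<exists>u\<in>D. v = u + 1 \<or> u = v + 1"
  using assms unfolding total_dominating_set_def path_E_def by blast

lemma sub: "total_dominating_set {1..n} path_E D \<Longrightarrow> D \<subseteq> {1..n}"
  unfolding total_dominating_set_def by blast

lemma block_ge2:
  assumes T: "total_dominating_set {1..4*k+3} path_E D" and q: "q < k"
  shows "card (D \<inter> {4*q+1..4*q+4}) \<ge> 2"
proof -
  have f: "finite (D \<inter> {4*q+1..4*q+4})" by simp
  obtain a where a: "a \<in> D" "4*q+2 = a+1 \<or> a = 4*q+3" using dom[OF T, of "4*q+2"] q by auto
  obtain b where b: "b \<in> D" "4*q+3 = b+1 \<or> b = 4*q+4" using dom[OF T, of "4*q+3"] q by auto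
  have "card {a,b} \<le> card (D \<inter> {4*q+1..4*q+4})" by (rule card_mono[OF f]) (use a b in auto)
  moreover have "a \<noteq> b" using a b by auto
  ultimately show ?thesis by simp
qed

lemma block_ex:
  assumes T: "total_dominating_set {1..4*k+3} path_E D" and q: "q < k"
    and c: "card (D \<inter> {4*q+1..4*q+4}) = 2"
  shows "(4*q+1 \<in> D \<longleftrightarrow> 4*q+3 \<notin> D) \<and> (4*q+2 \<in> D \<longleftrightarrow> 4*q+4 \<notin> D)"
proof -
  have f: "finite (D \<inter> {4*q+1..4*q+4})" by simp
  obtain a where a: "a \<in> D" "4*q+2 = a+1 \<or> a = 4*q+3" using dom[OF T, of "4*q+2"] q by auto
  obtain b where b: "b \<in> D" "4*q+3 = b+1 \<or> b = 4*q+4" using dom[OF T, of "4*q+3"] q by auto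
  have 1: "\<not> (4*q+1 \<in> D \<and> 4*q+3 \<in> D)"
  proof
    assume h: "4*q+1 \<in> D \<and> 4*q+3 \<in> D"
    have "card {4*q+1,4*q+3,b} \<le> card (D \<inter> {4*q+1..4*q+4})" by (rule card_mono[OF f]) (use h b in auto)
    moreover have "card {4*q+1,4*q+3,b} = 3" using b by auto
    ultimately show False using c by simp
  qed
  have 2: "\<not> (4*q+2 \<in> D \<and> 4*q+4 \<in> D)"
  proof
    assume h: "4*q+2 \<in> D \<and> 4*q+4 \<in> D"
    have "card {4*q+2,4*q+4,a} \<le> card (D \<inter> {4*q+1..4*q+4})" by (rule card_mono[OF f]) (use h a in auto)
    moreover have "card {4*q+2,4*q+4,a} = 3" using a by auto
    ultimately show False using c by simp
  qed
  show ?thesis using 1 2 a b by auto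
qed

lemma last_ge2:
  assumes T: "total_dominating_set {1..4*k+3} path_E D"
  shows "4*k+2 \<in> D" "card (D \<inter> {4*k+1..4*k+3}) \<ge> 2"
proof -
  have S: "D \<subseteq> {1..4*k+3}" using sub[OF T] .
  have f: "finite (D \<inter> {4*k+1..4*k+3})" by simp
  obtain a where a: "a \<in> D" "4*k+2 = a+1 \<or> a = 4*k+3" using dom[OF T, of "4*k+2"] by auto
  obtain b where b: "b \<in> D" "4*k+3 = b+1 \<or> b = 4*k+4" using dom[OF T, of "4*k+3"] by auto
  have bb: "b = 4*k+2" using b S by auto
  then show "4*k+2 \<in> D" using b by simp
  have "card {a,b} \<le> card (D \<inter> {4*k+1..4*k+3})" by (rule card_mono[OF f]) (use a b bb in auto)
  moreover have "a \<noteq> b" using a bb by auto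
  ultimately show "card (D \<inter> {4*k+1..4*k+3}) \<ge> 2" by simp
qed

lemma last_ex:
  assumes T: "total_dominating_set {1..4*k+3} path_E D"
    and c: "card (D \<inter> {4*k+1..4*k+3}) = 2"
  shows "4*k+1 \<in> D \<longleftrightarrow> 4*k+3 \<notin> D"
proof -
  have f: "finite (D \<inter> {4*k+1..4*k+3})" by simp
  have b: "4*k+2 \<in> D" using last_ge2[OF T] by simp
  obtain a where a: "a \<in> D" "4*k+2 = a+1 \<or> a = 4*k+3" using dom[OF T, of "4*k+2"] by auto
  have "\<not> (4*k+1 \<in> D \<and> 4*k+3 \<in> D)"
  proof
    assume h: "4*k+1 \<in> D \<and> 4*k+3 \<in> D"
    have "card {4*k+1,4*k+3,4*k+2} \<le> card (D \<inter> {4*k+1..4*k+3})" by (rule card_mono[OF f]) (use h b in auto)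
    moreover have "card {4*k+1,4*k+3,4*k+2::nat} = 3" by auto
    ultimately show False using c by simp
  qed
  then show ?thesis using a by auto
qed

lemma card_split: "finite (D::nat set) \<Longrightarrow> card (D \<inter> {1..4*m}) = (\<Sum>q<m. card (D \<inter> {4*q+1..4*q+4}))"
proof (induction m)
  case 0 then show ?case by simp
next
  case (Suc m)
  have "D \<inter> {1..4*Suc m} = (D \<inter> {1..4*m}) \<union> (D \<inter> {4*m+1..4*m+4})" by auto
  moreover have "(D \<inter> {1..4*m}) \<inter> (D \<inter> {4*m+1..4*m+4}) = {}" by auto
  ultimately have "card (D \<inter> {1..4*Suc m}) = card (D \<inter> {1..4*m}) + card (D \<inter> {4*m+1..4*m+4})"
    by (simp add: card_Un_disjoint)
  then show ?case using Suc by simp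
qed

lemma card_total:
  assumes "(D::nat set) \<subseteq> {1..4*k+3}"
  shows "card D = card (D \<inter> {1..4*k}) + card (D \<inter> {4*k+1..4*k+3})"
proof -
  have "D = (D \<inter> {1..4*k}) \<union> (D \<inter> {4*k+1..4*k+3})" using assms by auto
  moreover have "(D \<inter> {1..4*k}) \<inter> (D \<inter> {4*k+1..4*k+3}) = {}" by auto
  ultimately show ?thesis by (metis card_Un_disjoint finite_Int finite_atLeastAtMost)
qed

lemma tds_lower:
  assumes T: "total_dominating_set {1..4*k+3} path_E D"
  shows "card D \<ge> 2*k+2"
proof -
  have S: "D \<subseteq> {1..4*k+3}" using sub[OF T] .
  have fin: "finite D" using S finite_subset by blast
  have "(\<Sum>q<k. 2) \<le> (\<Sum>q<k. card (D \<inter> {4*q+1..4*q+4}))"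
    by (rule sum_mono) (use block_ge2[OF T] in auto)
  then show ?thesis using card_total[OF S] card_split[OF fin, of k] last_ge2[OF T] by simp
qed


lemma Dj_0: "4*q \<notin> Dj k j"
  unfolding Dj_def by (simp only: mem_Collect_eq m4) simp
lemma Dj_1: "4*q+1 \<in> Dj k j \<longleftrightarrow> q \<le> k \<and> j \<le> q"
  unfolding Dj_def by (simp only: mem_Collect_eq m4) auto
lemma Dj_2: "4*q+2 \<in> Dj k j \<longleftrightarrow> q \<le> k"
  unfolding Dj_def by (simp only: mem_Collect_eq m4) auto
lemma Dj_3: "4*q+3 \<in> Dj k j \<longleftrightarrow> q \<le> k \<and> q < j"
  unfolding Dj_def by (simp only: mem_Collect_eq m4) auto

lemma tds_min:
  assumes T: "total_dominating_set {1..4*k+3} path_E D" and c: "card D = 2*k+2"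
  shows "\<exists>j\<le>k+1. D = Dj k j"
proof -
  have S: "D \<subseteq> {1..4*k+3}" using sub[OF T] .
  have fin: "finite D" using S finite_subset by blast
  have ge: "\<And>q. q \<in> {..<k} \<Longrightarrow> 2 \<le> card (D \<inter> {4*q+1..4*q+4})" using block_ge2[OF T] by auto
  have s1: "(\<Sum>q<k. 2) \<le> (\<Sum>q<k. card (D \<inter> {4*q+1..4*q+4}))"
    by (rule sum_mono) (use ge in auto)
  have L: "card (D \<inter> {4*k+1..4*k+3}) \<ge> 2" using last_ge2[OF T] by simp
  have tot: "card D = (\<Sum>q<k. card (D \<inter> {4*q+1..4*q+4})) + card (D \<inter> {4*k+1..4*k+3})"
    using card_total[OF S] card_split[OF fin, of k] by simp
  have Leq: "card (D \<inter> {4*k+1..4*k+3}) = 2" using s1 L tot c by simp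
  have seq: "(\<Sum>q<k. card (D \<inter> {4*q+1..4*q+4})) = (\<Sum>q<k. 2)" using s1 L tot c by simp
  have beq: "card (D \<inter> {4*q+1..4*q+4}) = 2" if q: "q < k" for q
  proof (rule ccontr)
    assume "card (D \<inter> {4*q+1..4*q+4}) \<noteq> 2"
    then have "2 < card (D \<inter> {4*q+1..4*q+4})" using ge q by fastforce
    then have "(\<Sum>q<k. 2) < (\<Sum>q<k. card (D \<inter> {4*q+1..4*q+4}))"
      using sum_strict_mono_ex1[of "{..<k}" "\<lambda>_. 2::nat" "\<lambda>q. card (D \<inter> {4*q+1..4*q+4})"] ge q by auto
    then show False using seq by simp
  qed
  have ex: "(4*q+1 \<in> D \<longleftrightarrow> 4*q+3 \<notin> D) \<and> (4*q+2 \<in> D \<longleftrightarrow> 4*q+4 \<notin> D)" if "q < k" for q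
    using block_ex[OF T that beq[OF that]] .
  have lex: "4*k+1 \<in> D \<longleftrightarrow> 4*k+3 \<notin> D" using last_ex[OF T Leq] .
  have even: "q \<le> k \<Longrightarrow> 4*q+2 \<in> D" for q
  proof (induction q)
    case 0
    obtain u where u: "u \<in> D" "1 = u + 1 \<or> u = 2" using dom[OF T, of 1] by auto
    then have "2 \<in> D" using S by auto
    then show ?case by (metis add_0 mult_0_right)
  next
    case (Suc q)
    then have "4*q+2 \<in> D" by simp
    then have n4: "4*q+4 \<notin> D" using ex[of q] Suc by simp
    obtain u where u: "u \<in> D" "4*q+5 = u + 1 \<or> u = 4*q+6" using dom[OF T, of "4*q+5"] Suc by auto
    then have "4*q+6 \<in> D" using n4 by (auto simp: add.commute)
    then show ?case by (simp add: add.commute)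
  qed
  have odd: "q \<le> k \<Longrightarrow> 4*q+1 \<in> D \<longleftrightarrow> 4*q+3 \<notin> D" for q
    using ex[of q] lex by (cases "q = k") auto
  have mono: "4*(q+1)+3 \<in> D \<Longrightarrow> 4*q+3 \<in> D" if qk: "q < k" for q
  proof -
    assume h: "4*(q+1)+3 \<in> D"
    have "4*(q+1)+1 \<notin> D" using odd[of "q+1"] h qk by simp
    moreover obtain u where u: "u \<in> D" "4*q+4 = u + 1 \<or> u = 4*q+5" using dom[OF T, of "4*q+4"] qk by auto
    ultimately show ?thesis by (auto simp: add.commute)
  qed
  have nk: "4*(k+1)+3 \<notin> D" using S by auto
  define j where "j = (LEAST q. 4*q+3 \<notin> D)"
  have jle: "j \<le> k+1" unfolding j_def by (rule Least_le) (use nk in simp)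
  have jn: "4*j+3 \<notin> D" unfolding j_def by (rule LeastI[of _ "k+1"]) (use nk in simp)
  have above: "4*(j+d)+3 \<notin> D" for d
  proof (induction d)
    case 0 then show ?case using jn by simp
  next
    case (Suc d)
    show ?case
    proof
      assume h: "4*(j+Suc d)+3 \<in> D"
      then have "j + d < k" using S by auto
      then show False using mono[of "j+d"] h Suc by simp
    qed
  qed
  have a3: "4*q+3 \<in> D \<longleftrightarrow> q < j" for q
  proof
    assume "4*q+3 \<in> D" then show "q < j"
      using above[of "q-j"] by (cases "q < j") auto
  next
    assume "q < j" then show "4*q+3 \<in> D" unfolding j_def using not_less_Least by blast
  qed
  have "D = Dj k j"
  proof (rule set_eqI)
    fix v
    show "v \<in> D \<longleftrightarrow> v \<in> Dj k j"
    proof (rule mod4_cases[of v])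
      fix q assume v: "v = 4*q"
      have "v \<notin> D"
      proof
        assume "v \<in> D"
        then have "1 \<le> 4*q \<and> 4*q \<le> 4*k+3" using S v by auto
        then have q: "1 \<le> q" "q - 1 < k" by auto
        then have "4*(q-1)+2 \<in> D" using even[of "q-1"] by simp
        then have "4*(q-1)+4 \<notin> D" using ex[of "q-1"] q by simp
        moreover have "4*(q-1)+4 = v" using q v by simp
        ultimately show False using \<open>v \<in> D\<close> by simp
      qed
      then show ?thesis using v Dj_0 by simp
    next
      fix q assume v: "v = 4*q+1"
      show ?thesis
      proof (cases "q \<le> k")
        case True then show ?thesis unfolding v Dj_1 using odd[of q] a3[of q] by auto
      next
        case False then show ?thesis unfolding v Dj_1 using S v by auto
      qed
    next
      fix q assume v: "v = 4*q+2"
      show ?thesis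
      proof (cases "q \<le> k")
        case True then show ?thesis unfolding v Dj_2 using even[of q] by auto
      next
        case False then show ?thesis unfolding v Dj_2 using S v by auto
      qed
    next
      fix q assume v: "v = 4*q+3"
      show ?thesis
      proof (cases "q \<le> k")
        case True then show ?thesis unfolding v Dj_3 using a3[of q] by auto
      next
        case False then show ?thesis unfolding v Dj_3 using S v by auto
      qed
    qed
  qed
  then show ?thesis using jle by blast
qed


lemma Dj_sub: "Dj k j \<subseteq> {1..4*k+3}" unfolding Dj_def by auto

lemma Dj_tds:
  assumes j: "j \<le> k+1"
  shows "total_dominating_set {1..4*k+3} path_E (Dj k j)"
  unfolding total_dominating_set_def
proof (intro conjI ballI)
  show "Dj k j \<subseteq> {1..4*k+3}" by (rule Dj_sub)
  fix v assume v: "v \<in> {1..4*k+3}"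
  show "\<exists>u\<in>Dj k j. path_E v u"
  proof (rule mod4_cases[of v])
    fix q assume vq: "v = 4*q"
    then have q: "1 \<le> q" "q \<le> k" using v by auto
    show ?thesis
    proof (cases "q - 1 < j")
      case True
      have "4*(q-1)+3 \<in> Dj k j" using True q Dj_3 by auto
      moreover have "path_E v (4*(q-1)+3)" unfolding path_E_def using vq q by (cases q) auto
      ultimately show ?thesis by blast
    next
      case False
      have "4*q+1 \<in> Dj k j" using False q Dj_1 by auto
      moreover have "path_E v (4*q+1)" unfolding path_E_def using vq by simp
      ultimately show ?thesis by blast
    qed
  next
    fix q assume vq: "v = 4*q+1"
    then have q: "q \<le> k" using v by auto
    have "4*q+2 \<in> Dj k j" using q Dj_2 by auto
    moreover have "path_E v (4*q+2)" unfolding path_E_def using vq by simp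
    ultimately show ?thesis by blast
  next
    fix q assume vq: "v = 4*q+3"
    then have q: "q \<le> k" using v by auto
    have "4*q+2 \<in> Dj k j" using q Dj_2 by auto
    moreover have "path_E v (4*q+2)" unfolding path_E_def using vq by simp
    ultimately show ?thesis by blast
  next
    fix q assume vq: "v = 4*q+2"
    then have q: "q \<le> k" using v by auto
    show ?thesis
    proof (cases "q < j")
      case True
      have "4*q+3 \<in> Dj k j" using True q Dj_3 by auto
      moreover have "path_E v (4*q+3)" unfolding path_E_def using vq by simp
      ultimately show ?thesis by blast
    next
      case False
      have "4*q+1 \<in> Dj k j" using False q Dj_1 by auto
      moreover have "path_E v (4*q+1)" unfolding path_E_def using vq by simp
      ultimately show ?thesis by blast
    qed
  qed
qed

lemma Dj_card_le: "card (Dj k j) \<le> 2*k+2"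
proof -
  define f where "f = (\<lambda>(q::nat,b::bool). if b then 4*q+2 else if q < j then 4*q+3 else 4*q+1)"
  have "Dj k j \<subseteq> f ` ({..k} \<times> UNIV)"
  proof
    fix v assume h: "v \<in> Dj k j"
    show "v \<in> f ` ({..k} \<times> UNIV)"
    proof (rule mod4_cases[of v])
      fix q assume "v = 4*q" then show ?thesis using h Dj_0 by simp
    next
      fix q assume vq: "v = 4*q+1"
      then have "q \<le> k \<and> j \<le> q" using h Dj_1 by simp
      then have "v = f (q, False)" unfolding f_def using vq by simp
      then show ?thesis using \<open>q \<le> k \<and> j \<le> q\<close> by auto
    next
      fix q assume vq: "v = 4*q+2"
      then have "q \<le> k" using h Dj_2 by simp
      then have "v = f (q, True)" unfolding f_def using vq by simp
      then show ?thesis using \<open>q \<le> k\<close> by auto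
    next
      fix q assume vq: "v = 4*q+3"
      then have "q \<le> k \<and> q < j" using h Dj_3 by simp
      then have "v = f (q, False)" unfolding f_def using vq by simp
      then show ?thesis using \<open>q \<le> k \<and> q < j\<close> by auto
    qed
  qed
  then have "card (Dj k j) \<le> card (f ` ({..k} \<times> UNIV))" by (rule card_mono[rotated]) simp
  also have "\<dots> \<le> card ({..k} \<times> (UNIV::bool set))" by (rule card_image_le) simp
  also have "\<dots> = 2*k+2" by (simp add: card_cartesian_product)
  finally show ?thesis .
qed

lemma Dj_card: "j \<le> k+1 \<Longrightarrow> card (Dj k j) = 2*k+2"
  using Dj_card_le tds_lower[OF Dj_tds] by (meson le_antisym)

lemma Dj_inj: "inj_on (Dj k) {..k+1}"
proof (rule inj_onI)
  have *: "Dj k a \<noteq> Dj k b" if "a < b" "b \<le> k+1" for a b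
  proof -
    have "4*a+3 \<in> Dj k b" "4*a+3 \<notin> Dj k a" using that Dj_3 by auto
    then show ?thesis by blast
  qed
  fix a b assume "a \<in> {..k+1}" "b \<in> {..k+1}" "Dj k a = Dj k b"
  then show "a = b" using *[of a b] *[of b a] by (metis atMost_iff linorder_neqE_nat)
qed

lemma gts: "gamma_t_sets {1..4*k+3} path_E = Dj k ` {..k+1}"
proof -
  have fin: "finite {D. total_dominating_set {1..4*k+3} path_E D}"
    by (rule finite_subset[of _ "Pow {1..4*k+3}"]) (use sub in fastforce, simp)
  have g: "gamma_t {1..4*k+3} path_E = 2*k+2"
    unfolding gamma_t_def
  proof (rule Min_eqI)
    show "finite (card ` {D. total_dominating_set {1..4*k+3} path_E D})" using fin by simp
    show "\<And>y. y \<in> card ` {D. total_dominating_set {1..4*k+3} path_E D} \<Longrightarrow> 2*k+2 \<le> y"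
      using tds_lower by blast
    show "2*k+2 \<in> card ` {D. total_dominating_set {1..4*k+3} path_E D}"
      using Dj_tds[of 0 k] Dj_card[of 0 k] by (metis (mono_tags) image_eqI mem_Collect_eq zero_le)
  qed
  show ?thesis unfolding gamma_t_sets_def g
    using tds_min Dj_tds Dj_card by auto
qed

theorem proposition5p5:
  fixes k :: nat
  shows "tau (path_V (4*k+3)) path_E = k + 2 \<and>
    (\<forall>v \<in> path_V (4*k+3).
       TDV (path_V (4*k+3)) path_E v =
         (if v mod 4 = 0 then 0
          else if v mod 4 = 1 then v div 4 + 1
          else if v mod 4 = 2 then k + 2
          else k + 1 - v div 4))"
proof
  show "tau (path_V (4*k+3)) path_E = k + 2"
    unfolding tau_def path_V_def gts using card_image[OF Dj_inj] by simp
  show "\<forall>v \<in> path_V (4*k+3).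
       TDV (path_V (4*k+3)) path_E v =
         (if v mod 4 = 0 then 0
          else if v mod 4 = 1 then v div 4 + 1
          else if v mod 4 = 2 then k + 2
          else k + 1 - v div 4)"
  proof
    fix v assume v: "v \<in> path_V (4*k+3)"
    have "{D \<in> Dj k ` {..k+1}. v \<in> D} = Dj k ` {j \<in> {..k+1}. v \<in> Dj k j}" by auto
    then have T: "TDV (path_V (4*k+3)) path_E v = card {j \<in> {..k+1}. v \<in> Dj k j}"
      unfolding TDV_def path_V_def gts
      using card_image[OF inj_on_subset[OF Dj_inj, of "{j \<in> {..k+1}. v \<in> Dj k j}"]] by auto
    show "TDV (path_V (4*k+3)) path_E v =
         (if v mod 4 = 0 then 0
          else if v mod 4 = 1 then v div 4 + 1
          else if v mod 4 = 2 then k + 2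
          else k + 1 - v div 4)"
    proof (rule mod4_cases[of v])
      fix q assume vq: "v = 4*q"
      then show ?thesis unfolding T using Dj_0 by simp
    next
      fix q assume vq: "v = 4*q+1"
      then have q: "q \<le> k" using v unfolding path_V_def by auto
      have "{j \<in> {..k+1}. v \<in> Dj k j} = {..q}" using q unfolding vq Dj_1 by auto
      then have "TDV (path_V (4*k+3)) path_E v = q+1" using T q by simp
      moreover have "v mod 4 = 1" "v div 4 = q" unfolding vq by (simp only: m4)+
      ultimately show ?thesis by simp
    next
      fix q assume vq: "v = 4*q+2"
      then have q: "q \<le> k" using v unfolding path_V_def by auto
      have "{j \<in> {..k+1}. v \<in> Dj k j} = {..k+1}" using q unfolding vq Dj_2 by auto
      then have "TDV (path_V (4*k+3)) path_E v = k+2" using T q by simp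
      moreover have "v mod 4 = 2" "v div 4 = q" unfolding vq by (simp only: m4)+
      ultimately show ?thesis by simp
    next
      fix q assume vq: "v = 4*q+3"
      then have q: "q \<le> k" using v unfolding path_V_def by auto
      have "{j \<in> {..k+1}. v \<in> Dj k j} = {q<..k+1}" using q unfolding vq Dj_3 by auto
      then have "TDV (path_V (4*k+3)) path_E v = k+1-q" using T q by simp
      moreover have "v mod 4 = 3" "v div 4 = q" unfolding vq by (simp only: m4)+
      ultimately show ?thesis by simp
    qed
  qed
qed

end
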